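(* Let $\beta\in\mathbb{F}_{p^m}\setminus\{0\}$ and $\mathcal{R}_{\alpha,\beta}=R[x]/\langle x^{4p^s}-(\alpha+\beta u)\rangle$. Let $P(x)=ax^3+bx^2+cx+d\in\mathbb{F}_{p^m}[x]$ be a nonzero polynomial. Then $P(x)$ is a unit in $\mathcal{R}_{\alpha,\beta}$ if and only if $$P(x)\notin \left\langle x^2+\gamma x+\tfrac{\gamma^2}{2}\right\rangle\cup\left\langle x^2-\gamma x+\tfrac{\gamma^2}{2}\right\rangle$$ (ideals of $\mathcal{R}_{\alpha,\beta}$). As a consequence, $\langle x^4-\alpha_0\rangle\subsetneq\langle x^2+\gamma x+\frac{\gamma^2}{2}\rangle$ and $\langle x^4-\alpha_0\rangle\subsetneq\langle x^2-\gamma x+\frac{\gamma^2}{2}\rangle$ in $\mathcal{R}_{\alpha,\beta}$.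
   Context: Let $p$ be an odd prime and $m,s$ positive integers with $p^m\equiv 3\pmod 4$; $\mathbb{F}_{p^m}$ is the field with $p^m$ elements and $R=\mathbb{F}_{p^m}[u]/\langle u^2\rangle$. Fix $\alpha\in\mathbb{F}_{p^m}\setminus\{0\}$ that is not a square in $\mathbb{F}_{p^m}$, let $\alpha_0\in\mathbb{F}_{p^m}$ satisfy $\alpha_0^{p^s}=\alpha$, and let $\gamma\in\mathbb{F}_{p^m}$ satisfy $\gamma^4+4\alpha_0=0$. *)

theory Defs
  imports "HOL-Computational_Algebra.Polynomial" "HOL-Library.Cardinality"
begin

text \<open>The ring R = F[u]/<u^2>: the element Dual a b stands for a + b u.\<close>
datatype 'a dual = Dual 'a 'a

fun dfst :: "'a dual \<Rightarrow> 'a" where "dfst (Dual a b) = a"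
fun dsnd :: "'a dual \<Rightarrow> 'a" where "dsnd (Dual a b) = b"

lemma dual_eq_iff: "x = y \<longleftrightarrow> dfst x = dfst y \<and> dsnd x = dsnd y"
  by (cases x; cases y) auto

instantiation dual :: (comm_ring_1) comm_ring_1
begin
definition "0 = Dual 0 0"
definition "1 = Dual 1 0"
definition "x + y = Dual (dfst x + dfst y) (dsnd x + dsnd y)"
definition "x - y = Dual (dfst x - dfst y) (dsnd x - dsnd y)"
definition "- x = Dual (- dfst x) (- dsnd x)"
definition "x * y = Dual (dfst x * dfst y) (dfst x * dsnd y + dsnd x * dfst y)"
instance
  by standard (auto simp: dual_eq_iff zero_dual_def one_dual_def plus_dual_def
      minus_dual_def uminus_dual_def times_dual_def algebra_simps)
end

definition lift_poly :: "'a::comm_ring_1 poly \<Rightarrow> 'a dual poly" where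
  "lift_poly f = map_poly (\<lambda>c. Dual c 0) f"

definition rmod :: "nat \<Rightarrow> 'a::comm_ring_1 \<Rightarrow> 'a \<Rightarrow> 'a dual poly" where
  "rmod N \<alpha> \<beta> = monom 1 N - [:Dual \<alpha> \<beta>:]"

definition quot_unit :: "'a::comm_ring_1 poly \<Rightarrow> 'a poly \<Rightarrow> bool" where
  "quot_unit M P \<longleftrightarrow> (\<exists>Q. M dvd (P * Q - 1))"

text \<open>The principal ideal <g> of R[x]/<M>, represented by its full preimage in R[x].\<close>
definition quot_ideal :: "'a::comm_ring_1 poly \<Rightarrow> 'a poly \<Rightarrow> 'a poly set" where
  "quot_ideal M g = {P. \<exists>Q. M dvd (P - Q * g)}"

end

theory Submission
  imports Defs "HOL-Computational_Algebra.Computational_Algebra" "HOL-Number_Theory.Number_Theory"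
begin
hide_const (open) UnivPoly.coeff UnivPoly.monom UnivPoly.deg

definition D :: "'a::comm_ring_1 dual poly \<Rightarrow> 'a poly" where
  "D p = map_poly dfst p"

lemma dfst_0[simp]: "dfst 0 = 0" by (simp add: zero_dual_def)
lemma dfst_1[simp]: "dfst 1 = 1" by (simp add: one_dual_def)
lemma dfst_add[simp]: "dfst (x + y) = dfst x + dfst y" by (simp add: plus_dual_def)
lemma dfst_diff[simp]: "dfst (x - y) = dfst x - dfst y" by (simp add: minus_dual_def)
lemma dfst_mul[simp]: "dfst (x * y) = dfst x * dfst y" by (simp add: times_dual_def)
lemma dfst_sum: "dfst (sum f A) = (\<Sum>i\<in>A. dfst (f i))"
  by (induction A rule: infinite_finite_induct) auto

lemma coeff_D[simp]: "coeff (D p) n = dfst (coeff p n)"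
  by (simp add: D_def coeff_map_poly)

lemma D_add[simp]: "D (p + q) = D p + D q" by (rule poly_eqI) simp
lemma D_diff[simp]: "D (p - q) = D p - D q" by (rule poly_eqI) simp
lemma D_mult[simp]: "D (p * q) = D p * D q"
  by (rule poly_eqI) (simp add: coeff_mult dfst_sum)
lemma D_1[simp]: "D 1 = 1" by (simp add: D_def)
lemma D_monom[simp]: "D (monom c n) = monom (dfst c) n" by (simp add: D_def map_poly_monom)
lemma D_const[simp]: "D [:c:] = [:dfst c:]"
  by (rule poly_eqI) (simp add: coeff_pCons split: nat.split)
lemma D_dvd: "p dvd q \<Longrightarrow> D p dvd D q"
  by (metis D_mult dvd_def)

lemma coeff_lift[simp]: "coeff (lift_poly p) n = Dual (coeff p n) 0"
  by (simp add: lift_poly_def coeff_map_poly zero_dual_def)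
lemma D_lift[simp]: "D (lift_poly p) = p" by (rule poly_eqI) simp

lemma Dual_sum: "(\<Sum>i\<in>A. Dual (f i) 0) = Dual (sum f A) 0"
  by (induction A rule: infinite_finite_induct) (auto simp: zero_dual_def plus_dual_def)

lemma lift_add[simp]: "lift_poly (p + q) = lift_poly p + lift_poly q"
  by (rule poly_eqI) (simp add: plus_dual_def)
lemma lift_diff[simp]: "lift_poly (p - q) = lift_poly p - lift_poly q"
  by (rule poly_eqI) (simp add: minus_dual_def)
lemma lift_mult[simp]: "lift_poly (p * q) = lift_poly p * lift_poly q"
  by (rule poly_eqI) (simp add: coeff_mult times_dual_def Dual_sum)
lemma lift_1[simp]: "lift_poly 1 = 1"
  by (simp add: lift_poly_def one_dual_def)
lemma lift_power[simp]: "lift_poly (p ^ n) = lift_poly p ^ n"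
  by (induction n) auto
lemma lift_monom[simp]: "lift_poly (monom c n) = monom (Dual c 0) n"
  by (rule poly_eqI) (simp add: coeff_monom zero_dual_def)
lemma lift_const[simp]: "lift_poly [:c:] = [:Dual c 0:]"
  by (rule poly_eqI) (simp add: coeff_pCons split: nat.split add: zero_dual_def)

lemma ideal_sub: "F = G * H \<Longrightarrow> quot_ideal M F \<subseteq> quot_ideal M G"
  unfolding quot_ideal_def by (auto, metis mult.assoc mult.commute)

lemma in_ideal_self: "G \<in> quot_ideal M G"
  unfolding quot_ideal_def by (rule CollectI, rule exI[of _ 1]) simp

lemma dvd_in_ideal: "g dvd P \<Longrightarrow> lift_poly P \<in> quot_ideal M (lift_poly g)"
  unfolding quot_ideal_def
proof -
  assume "g dvd P"
  then obtain h where "P = g * h" by (auto elim: dvdE)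
  then show "lift_poly P \<in> {P. \<exists>Q. M dvd P - Q * lift_poly g}"
    by (intro CollectI exI[of _ "lift_poly h"]) (simp add: mult.commute)
qed

lemma not_in_ideal:
  assumes "f dvd D M" "\<not> f dvd g"
  shows "lift_poly g \<notin> quot_ideal M (lift_poly f)"
proof
  assume "lift_poly g \<in> quot_ideal M (lift_poly f)"
  then obtain Q where "M dvd lift_poly g - Q * lift_poly f" unfolding quot_ideal_def by auto
  then have "D M dvd g - D Q * f" using D_dvd by fastforce
  then have "f dvd g - D Q * f" using assms(1) dvd_trans by blast
  then have "f dvd g" by (metis diff_add_cancel dvd_add dvd_triv_right)
  with assms(2) show False ..
qed

lemma not_unit:
  assumes "quot_unit M X" "X \<in> quot_ideal M G" "D G dvd D M" "\<not> is_unit (D G)"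
  shows False
proof -
  obtain R where R: "M dvd X * R - 1" using assms(1) unfolding quot_unit_def by auto
  obtain Q where Q: "M dvd X - Q * G" using assms(2) unfolding quot_ideal_def by auto
  have "M dvd (X * R - 1) - (X - Q * G) * R" using R Q by (simp add: dvd_diff)
  moreover have "(X * R - 1) - (X - Q * G) * R = G * (Q * R) - 1" by (simp add: algebra_simps)
  ultimately have "M dvd G * (Q * R) - 1" by simp
  then have "D M dvd D G * (D Q * D R) - 1" using D_dvd by fastforce
  then have "D G dvd D G * (D Q * D R) - 1" using assms(3) dvd_trans by blast
  moreover have "D G dvd D G * (D Q * D R)" by simp
  ultimately have "D G dvd D G * (D Q * D R) - (D G * (D Q * D R) - 1)" by (rule dvd_diff[rotated])
  then have "D G dvd 1" by simp
  with assms(4) show False by simp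
qed

lemma unit_from_bezout:
  assumes "A * P + B * f = 1" "M dvd lift_poly f ^ n"
  shows "quot_unit M (lift_poly P)"
proof -
  define e where "e = lift_poly B * lift_poly f"
  have 1: "lift_poly P * lift_poly A = 1 - e"
    using arg_cong[OF assms(1), of lift_poly] by (simp add: e_def algebra_simps)
  define Q where "Q = lift_poly A * (\<Sum>i<n. e ^ i)"
  have "lift_poly P * Q - 1 = (1 - e) * (\<Sum>i<n. e ^ i) - 1"
    by (simp add: Q_def 1[symmetric] mult.assoc)
  also have "\<dots> = - (e ^ n)"
    by (simp add: one_diff_power_eq[symmetric])
  also have "\<dots> = - (lift_poly B ^ n * lift_poly f ^ n)"
    by (simp add: e_def power_mult_distrib)
  finally have "M dvd lift_poly P * Q - 1" using assms(2) by simp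
  then show ?thesis unfolding quot_unit_def by blast
qed

lemma const_inv:
  fixes e :: "'a::field poly"
  assumes "degree e = 0" "e \<noteq> 0"
  shows "[:1 / coeff e 0:] * e = 1"
proof -
  obtain c where c: "e = [:c:]" using assms(1) by (auto elim: degree_eq_zeroE)
  then have "c \<noteq> 0" using assms(2) by auto
  then show ?thesis using c by simp
qed

lemma deg1_root:
  fixes d :: "'a::field poly"
  assumes "degree d = 1"
  shows "\<exists>r. poly d r = 0"
proof -
  have "d \<noteq> 0" using assms by auto
  then have "coeff d (degree d) \<noteq> 0" by simp
  then have c1: "coeff d 1 \<noteq> 0" using assms by simp
  have "poly d (- coeff d 0 / coeff d 1) = coeff d 0 + coeff d 1 * (- coeff d 0 / coeff d 1)"
    by (simp add: poly_altdef assms)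
  also have "\<dots> = 0" using c1 by simp
  finally show ?thesis by blast
qed

lemma bezout_deg2:
  fixes g P :: "'a::field poly"
  assumes "g \<noteq> 0" "degree g = 2" "\<And>r. poly g r \<noteq> 0" "\<not> g dvd P"
  shows "\<exists>A B. A * P + B * g = 1"
proof -
  define q r where "q = P div g" and "r = P mod g"
  have Pqr: "P = q * g + r" by (simp add: q_def r_def)
  have r0: "r \<noteq> 0" using assms(4) by (simp add: r_def mod_eq_0_iff_dvd)
  have "degree r < 2" using degree_mod_less[OF assms(1), of P] r0 assms(2) by (simp add: r_def)
  then consider "degree r = 0" | "degree r = 1" by linarith
  then show ?thesis
  proof cases
    case 1
    define c where "c = [:1 / coeff r 0:]"
    have "c * r = 1" using const_inv[OF 1 r0] by (simp add: c_def)
    then have "c * P + (- c * q) * g = 1" using Pqr by (simp add: algebra_simps)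
    then show ?thesis by blast
  next
    case 2
    define t e where "t = g div r" and "e = g mod r"
    have gte: "g = t * r + e" by (simp add: t_def e_def)
    have e0: "e \<noteq> 0"
    proof
      assume "e = 0"
      then have "r dvd g" using gte by simp
      then obtain h where h: "g = r * h" by (auto elim: dvdE)
      obtain x where "poly r x = 0" using deg1_root[OF 2] by blast
      then have "poly g x = 0" using h by simp
      with assms(3) show False by blast
    qed
    have "degree e < 1" using degree_mod_less[OF r0, of g] e0 2 by (simp add: e_def)
    then have de: "degree e = 0" by simp
    define c where "c = [:1 / coeff e 0:]"
    have ce: "c * e = 1" using const_inv[OF de e0] by (simp add: c_def)
    have ee: "e = (1 + t * q) * g - t * P" using gte Pqr by (simp add: algebra_simps)
    have "(- c * t) * P + (c * (1 + t * q)) * g = c * e" by (simp add: ee algebra_simps)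
    then have "(- c * t) * P + (c * (1 + t * q)) * g = 1" using ce by simp
    then show ?thesis by blast
  qed
qed


theorem proposition3p2:
  fixes p m s :: nat and \<alpha> \<beta> \<alpha>0 \<gamma> a b c d :: "'a::{field,finite}"
  assumes "prime p" and "odd p" and "m > 0" and "s > 0"
    and "CARD('a) = p ^ m" and "p ^ m mod 4 = 3"
    and "\<alpha> \<noteq> 0" and "\<not> (\<exists>y. y ^ 2 = \<alpha>)"
    and "\<alpha>0 ^ (p ^ s) = \<alpha>" and "\<gamma> ^ 4 + 4 * \<alpha>0 = 0"
    and "\<beta> \<noteq> 0"
    and "[:d, c, b, a:] \<noteq> 0"
  shows "(quot_unit (rmod (4 * p ^ s) \<alpha> \<beta>) (lift_poly [:d, c, b, a:]) \<longleftrightarrow>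
            lift_poly [:d, c, b, a:] \<notin>
              quot_ideal (rmod (4 * p ^ s) \<alpha> \<beta>) (lift_poly [:\<gamma>^2 / 2, \<gamma>, 1:]) \<union>
              quot_ideal (rmod (4 * p ^ s) \<alpha> \<beta>) (lift_poly [:\<gamma>^2 / 2, - \<gamma>, 1:]))
       \<and> quot_ideal (rmod (4 * p ^ s) \<alpha> \<beta>) (lift_poly [:- \<alpha>0, 0, 0, 0, 1:]) \<subset>
           quot_ideal (rmod (4 * p ^ s) \<alpha> \<beta>) (lift_poly [:\<gamma>^2 / 2, \<gamma>, 1:])
       \<and> quot_ideal (rmod (4 * p ^ s) \<alpha> \<beta>) (lift_poly [:- \<alpha>0, 0, 0, 0, 1:]) \<subset>
           quot_ideal (rmod (4 * p ^ s) \<alpha> \<beta>) (lift_poly [:\<gamma>^2 / 2, - \<gamma>, 1:])"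
proof -
  define k where "k = p ^ s"
  define M where "M = rmod (4 * p ^ s) \<alpha> \<beta>"
  define f where "f = [:- \<alpha>0, 0, 0, 0, 1:]"
  define g1 where "g1 = [:\<gamma>^2 / 2, \<gamma>, 1:]"
  define g2 where "g2 = [:\<gamma>^2 / 2, - \<gamma>, 1:]"
  define P where "P = [:d, c, b, a:]"
  have kpos: "k > 0" using assms(1) by (simp add: k_def prime_gt_0_nat)
  have kodd: "odd k" using assms(2) by (simp add: k_def)
  have cpos: "CHAR('a) > 0" by (rule finite_imp_CHAR_pos) simp
  have cprime: "prime CHAR('a)" using prime_CHAR_semidom[OF cpos] .
  have "CHAR('a) dvd p ^ m" using CHAR_dvd_CARD[where 'a='a] assms(5) by simp
  then have "CHAR('a) dvd p" using cprime prime_dvd_power by blast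
  then have charp: "CHAR('a) = p" using cprime assms(1) by (simp add: primes_dvd_imp_eq)
  have two: "(2::'a) \<noteq> 0"
  proof
    assume "(2::'a) = 0"
    then have "of_nat 2 = (0::'a)" by simp
    then have "p dvd 2" using of_nat_eq_0_iff_char_dvd charp by metis
    then have "p \<le> 2" by (simp add: dvd_imp_le)
    moreover have "p \<ge> 2" using assms(1) prime_ge_2_nat by blast
    ultimately show False using assms(2) by simp
  qed
  have four: "(4::'a) \<noteq> 0"
  proof -
    have "(4::'a) = 2 * 2" by simp
    then show ?thesis using two by (metis mult_eq_0_iff)
  qed
  have g4: "\<gamma> * (\<gamma> * (\<gamma> * \<gamma>)) = - (\<alpha>0 * 4)"
    using assms(10) by (simp add: power4_eq_xxxx eq_neg_iff_add_eq_0 algebra_simps)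
  have fg: "f = g1 * g2"
    using two four g4 by (simp add: f_def g1_def g2_def field_simps power4_eq_xxxx power2_eq_square)
  have f_alt: "f = monom 1 4 + - [:\<alpha>0:]"
    by (simp add: f_def numeral_eq_Suc monom_Suc monom_0)
  have cp: "CHAR('a poly) = p" using charp by simp
  have "f ^ k = monom 1 4 ^ k + (- [:\<alpha>0:]) ^ k"
    unfolding f_alt by (rule freshmans_dream') (use cp assms(1) in \<open>simp_all add: k_def\<close>)
  also have "(- [:\<alpha>0:]) ^ k = - [:\<alpha>:]"
    using kodd by (simp add: poly_const_pow k_def assms(9))
  also have "monom (1::'a) 4 ^ k = monom 1 (4 * p ^ s)"
    by (simp add: monom_power k_def)
  finally have fk: "f ^ k = monom 1 (4 * p ^ s) - [:\<alpha>:]" by simp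
  define E where "E = [:Dual 0 \<beta>:]"
  have EE: "E * E = 0" by (simp add: E_def times_dual_def zero_dual_def)
  have Msplit: "M = lift_poly f ^ k - E"
  proof -
    have "lift_poly f ^ k = lift_poly (f ^ k)" by simp
    also have "\<dots> = monom 1 (4 * p ^ s) - [:Dual \<alpha> 0:]"
      by (simp add: fk one_dual_def)
    finally have 1: "lift_poly f ^ k = monom 1 (4 * p ^ s) - [:Dual \<alpha> 0:]" .
    have 2: "[:Dual \<alpha> \<beta>:] = [:Dual \<alpha> 0:] + E" by (simp add: E_def plus_dual_def)
    show ?thesis unfolding M_def rmod_def 1 2 by simp
  qed
  have Mdvd: "M dvd lift_poly f ^ (2 * k)"
  proof -
    have "lift_poly f ^ (2 * k) = (M + E) * (M + E)"
      by (simp add: Msplit power_mult power2_eq_square mult.commute)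
    also have "\<dots> = M * (M + E + E) + E * E" by (simp add: algebra_simps)
    finally show ?thesis by (simp add: EE)
  qed
  have DM: "D M = f ^ k"
  proof -
    have "M = lift_poly (f ^ k) - E" by (simp add: Msplit)
    then show ?thesis by (simp add: E_def zero_dual_def del: lift_power)
  qed
  have polyf: "poly f r = r ^ 4 - \<alpha>0" for r
    by (simp add: f_def algebra_simps power4_eq_xxxx)
  have noroot_f: "poly f r \<noteq> 0" for r
  proof
    assume "poly f r = 0"
    then have "r ^ 4 = \<alpha>0" by (simp add: polyf)
    then have "(r ^ (2 * k)) ^ 2 = \<alpha>" using assms(9)
      by (metis k_def mult.commute power_mult numeral_Bit0 numeral_One one_add_one mult_2 power_add)
    with assms(8) show False by blast
  qed
  have noroot1: "poly g1 r \<noteq> 0" for r using noroot_f[of r] fg by auto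
  have noroot2: "poly g2 r \<noteq> 0" for r using noroot_f[of r] fg by auto
  have dg1: "degree g1 = 2" and dg2: "degree g2 = 2" and df: "degree f = 4"
    by (simp_all add: g1_def g2_def f_def)
  have g10: "g1 \<noteq> 0" and g20: "g2 \<noteq> 0" and f0: "f \<noteq> 0" using dg1 dg2 df by auto
  have fDM: "f dvd D M" unfolding DM using kpos by (simp add: dvd_power)
  have g1DM: "g1 dvd D M" using fDM fg by (metis dvd_trans dvd_triv_left)
  have g2DM: "g2 dvd D M" using fDM fg by (metis dvd_trans dvd_triv_right)
  have nu1: "\<not> is_unit g1" using is_unit_iff_degree[OF g10] dg1 by simp
  have nu2: "\<not> is_unit g2" using is_unit_iff_degree[OF g20] dg2 by simp
  have nf1: "\<not> f dvd g1"
  proof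
    assume "f dvd g1"
    then have "degree f \<le> degree g1" by (rule dvd_imp_degree_le[OF _ g10])
    then show False using dg1 df by simp
  qed
  have nf2: "\<not> f dvd g2"
  proof
    assume "f dvd g2"
    then have "degree f \<le> degree g2" by (rule dvd_imp_degree_le[OF _ g20])
    then show False using dg2 df by simp
  qed
  have part1: "quot_unit M (lift_poly P) \<longleftrightarrow>
      lift_poly P \<notin> quot_ideal M (lift_poly g1) \<union> quot_ideal M (lift_poly g2)"
  proof
    assume u: "quot_unit M (lift_poly P)"
    show "lift_poly P \<notin> quot_ideal M (lift_poly g1) \<union> quot_ideal M (lift_poly g2)"
    proof
      assume "lift_poly P \<in> quot_ideal M (lift_poly g1) \<union> quot_ideal M (lift_poly g2)"
      then show False
      proof
        assume "lift_poly P \<in> quot_ideal M (lift_poly g1)"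
        from not_unit[OF u this] g1DM nu1 show False by simp
      next
        assume "lift_poly P \<in> quot_ideal M (lift_poly g2)"
        from not_unit[OF u this] g2DM nu2 show False by simp
      qed
    qed
  next
    assume "lift_poly P \<notin> quot_ideal M (lift_poly g1) \<union> quot_ideal M (lift_poly g2)"
    then have "\<not> g1 dvd P" "\<not> g2 dvd P" using dvd_in_ideal by blast+
    then obtain A1 B1 A2 B2 where b1: "A1 * P + B1 * g1 = 1" and b2: "A2 * P + B2 * g2 = 1"
      using bezout_deg2[OF g10 dg1 noroot1] bezout_deg2[OF g20 dg2 noroot2] by blast
    have "(A1 * A2 * P + A1 * B2 * g2 + B1 * g1 * A2) * P + (B1 * B2) * f
          = (A1 * P + B1 * g1) * (A2 * P + B2 * g2)" by (simp add: fg algebra_simps)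
    also have "\<dots> = 1" by (simp add: b1 b2)
    finally show "quot_unit M (lift_poly P)" by (rule unit_from_bezout[OF _ Mdvd])
  qed
  have part2: "quot_ideal M (lift_poly f) \<subset> quot_ideal M (lift_poly g1)"
  proof
    show "quot_ideal M (lift_poly f) \<subseteq> quot_ideal M (lift_poly g1)"
      by (rule ideal_sub) (simp add: fg)
    show "quot_ideal M (lift_poly f) \<noteq> quot_ideal M (lift_poly g1)"
      using in_ideal_self[of "lift_poly g1" M] not_in_ideal[OF fDM nf1] by blast
  qed
  have part3: "quot_ideal M (lift_poly f) \<subset> quot_ideal M (lift_poly g2)"
  proof
    show "quot_ideal M (lift_poly f) \<subseteq> quot_ideal M (lift_poly g2)"
      by (rule ideal_sub) (simp add: fg mult.commute)
    show "quot_ideal M (lift_poly f) \<noteq> quot_ideal M (lift_poly g2)"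
      using in_ideal_self[of "lift_poly g2" M] not_in_ideal[OF fDM nf2] by blast
  qed
  show ?thesis using part1 part2 part3
    unfolding M_def P_def f_def g1_def g2_def by blast
qed

end
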